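(* Let $\mathbf{L}$ be a Euclidean modal logic and let $\mathcal{F}^{\rho}_{A,B}$ be a galaxy in $\mathcal{K}_2$. If $\{2\}\times\mathbf{N}^{-}\subseteq\mathtt{S}_{\mathbf{L}}$, then $\mathbf{L}$ is valid in $\mathcal{F}^{\rho}_{A,B}$.
   Context: A frame is a pair $(W,R)$ with $W$ non-empty and $R\subseteq W\times W$. Modal formulas (propositional variables, $\bot,\neg,\vee,\Box$) have standard Kripke semantics; validity means truth at all points under all valuations. A (normal) modal logic contains all tautologies and K axioms and is closed under uniform substitution, modus ponens and necessitation; a Euclidean modal logic is one not containing $\bot$ and containing $\Diamond\psi\to\Box\Diamond\psi$ for all $\psi$. For sets $A,B$ with $A\cap B=\emptyset$, $A\cup B\ne\emptyset$ and $\rho:A\to\wp(B)$, the galaxy $\mathcal{F}^{\rho}_{A,B}$ has universe $A\cup B$ and relation $\bigcup_{s\in A}(\{s\}\times\rho(s))\cup(B\times B)$. $\mathcal{K}_2$ is the class of galaxies with $|A|\ge4$, $|B|\ge4$ and $|\rho(s)|=2$ for all $s\in A$. $\mathbf{N}^{+}=\{1,2,\dots\}$, $\mathbf{N}^{-}=\{-1,0,1,\dots\}$. For $m\in\mathbf{N}^{+}$, $n\ge0$, the flower $\mathcal{F}_m^n$ has universe $\{0,\dots,m+n\}$ and relation $(\{0\}\times\{1,\dots,m\})\cup\{1,\dots,m+n\}^2$; $\mathcal{F}_m^{-1}$ has universe $\{1,\dots,m\}$ and relation $\{1,\dots,m\}^2$. $\mathtt{S}_{\mathbf{L}}=\{(m,n)\in\mathbf{N}^{+}\times\mathbf{N}^{-}:\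 \mathbf{L}\text{ valid in }\mathcal{F}_m^n\}$. *)

theory Defs
  imports Main
begin

datatype 'v fm = Var 'v | Bot | Neg "'v fm" | Disj "'v fm" "'v fm" | Box "'v fm"

definition Imp :: "'v fm \<Rightarrow> 'v fm \<Rightarrow> 'v fm" where
  "Imp a b = Disj (Neg a) b"

definition Dia :: "'v fm \<Rightarrow> 'v fm" where
  "Dia a = Neg (Box (Neg a))"

fun sat :: "('a \<times> 'a) set \<Rightarrow> ('v \<Rightarrow> 'a set) \<Rightarrow> 'a \<Rightarrow> 'v fm \<Rightarrow> bool" where
  "sat R V w (Var p) = (w \<in> V p)"
| "sat R V w Bot = False"
| "sat R V w (Neg a) = (\<not> sat R V w a)"
| "sat R V w (Disj a b) = (sat R V w a \<or> sat R V w b)"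
| "sat R V w (Box a) = (\<forall>v. (w, v) \<in> R \<longrightarrow> sat R V v a)"

definition valid_in :: "'a set \<Rightarrow> ('a \<times> 'a) set \<Rightarrow> 'v fm \<Rightarrow> bool" where
  "valid_in W R a = (\<forall>V. \<forall>w\<in>W. sat R V w a)"

definition logic_valid_in :: "'v fm set \<Rightarrow> 'a set \<Rightarrow> ('a \<times> 'a) set \<Rightarrow> bool" where
  "logic_valid_in L W R = (\<forall>a\<in>L. valid_in W R a)"

fun peval :: "('v fm \<Rightarrow> bool) \<Rightarrow> 'v fm \<Rightarrow> bool" where
  "peval I (Var p) = I (Var p)"
| "peval I Bot = False"
| "peval I (Neg a) = (\<not> peval I a)"
| "peval I (Disj a b) = (peval I a \<or> peval I b)"
| "peval I (Box a) = I (Box a)"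

definition tautology :: "'v fm \<Rightarrow> bool" where
  "tautology a = (\<forall>I. peval I a)"

fun subst :: "('v \<Rightarrow> 'v fm) \<Rightarrow> 'v fm \<Rightarrow> 'v fm" where
  "subst s (Var p) = s p"
| "subst s Bot = Bot"
| "subst s (Neg a) = Neg (subst s a)"
| "subst s (Disj a b) = Disj (subst s a) (subst s b)"
| "subst s (Box a) = Box (subst s a)"

definition normal_logic :: "'v fm set \<Rightarrow> bool" where
  "normal_logic L =
     ((\<forall>a. tautology a \<longrightarrow> a \<in> L)
    \<and> (\<forall>a b. Imp (Box (Imp a b)) (Imp (Box a) (Box b)) \<in> L)
    \<and> (\<forall>s a. a \<in> L \<longrightarrow> subst s a \<in> L)
    \<and> (\<forall>a b. a \<in> L \<longrightarrow> Imp a b \<in> L \<longrightarrow> b \<in> L)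
    \<and> (\<forall>a. a \<in> L \<longrightarrow> Box a \<in> L))"

definition euclidean_logic :: "'v fm set \<Rightarrow> bool" where
  "euclidean_logic L =
     (normal_logic L \<and> Bot \<notin> L \<and> (\<forall>a. Imp (Dia a) (Box (Dia a)) \<in> L))"

definition is_galaxy :: "'a set \<Rightarrow> 'a set \<Rightarrow> ('a \<Rightarrow> 'a set) \<Rightarrow> bool" where
  "is_galaxy A B \<rho> = (A \<inter> B = {} \<and> A \<union> B \<noteq> {} \<and> (\<forall>s\<in>A. \<rho> s \<subseteq> B))"

definition galaxy_W :: "'a set \<Rightarrow> 'a set \<Rightarrow> 'a set" where
  "galaxy_W A B = A \<union> B"

definition galaxy_R :: "'a set \<Rightarrow> 'a set \<Rightarrow> ('a \<Rightarrow> 'a set) \<Rightarrow> ('a \<times> 'a) set" where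
  "galaxy_R A B \<rho> = (\<Union>s\<in>A. {s} \<times> \<rho> s) \<union> (B \<times> B)"

definition card_ge4 :: "'a set \<Rightarrow> bool" where
  "card_ge4 X = (infinite X \<or> card X \<ge> 4)"

definition in_K2 :: "'a set \<Rightarrow> 'a set \<Rightarrow> ('a \<Rightarrow> 'a set) \<Rightarrow> bool" where
  "in_K2 A B \<rho> = (is_galaxy A B \<rho> \<and> card_ge4 A \<and> card_ge4 B
                   \<and> (\<forall>s\<in>A. finite (\<rho> s) \<and> card (\<rho> s) = 2))"

definition flower_W :: "nat \<Rightarrow> int \<Rightarrow> nat set" where
  "flower_W m n = (if n = -1 then {1..m} else {0..m + nat n})"

definition flower_R :: "nat \<Rightarrow> int \<Rightarrow> (nat \<times> nat) set" where
  "flower_R m n = (if n = -1 then {1..m} \<times> {1..m}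
                   else ({0} \<times> {1..m}) \<union> ({1..m + nat n} \<times> {1..m + nat n}))"

definition S_of :: "'v fm set \<Rightarrow> (nat \<times> int) set" where
  "S_of L = {(m, n). m \<ge> 1 \<and> n \<ge> -1 \<and> logic_valid_in L (flower_W m n) (flower_R m n)}"

end

theory Submission
  imports Defs
begin

fun vars :: "'v fm \<Rightarrow> 'v set" where
  "vars (Var p) = {p}"
| "vars Bot = {}"
| "vars (Neg a) = vars a"
| "vars (Disj a b) = vars a \<union> vars b"
| "vars (Box a) = vars a"

lemma finite_vars: "finite (vars a)"
  by (induction a) auto

lemma bisim:
  assumes atoms: "\<And>x y p. (x,y) \<in> Z \<Longrightarrow> p \<in> X \<Longrightarrow> (x \<in> V p \<longleftrightarrow> y \<in> V' p)"
    and fwd: "\<And>x y x'. (x,y) \<in> Z \<Longrightarrow> (x,x') \<in> R \<Longrightarrow> \<exists>y'. (y,y') \<in> R' \<and> (x',y') \<in> Z"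
    and bck: "\<And>x y y'. (x,y) \<in> Z \<Longrightarrow> (y,y') \<in> R' \<Longrightarrow> \<exists>x'. (x,x') \<in> R \<and> (x',y') \<in> Z"
    and "vars a \<subseteq> X"
  shows "(x,y) \<in> Z \<Longrightarrow> sat R V x a = sat R' V' y a"
  using assms(4)
proof (induction a arbitrary: x y)
  case (Var p) then show ?case using atoms by auto
next
  case (Box a)
  show ?case
  proof
    assume h: "sat R V x (Box a)"
    show "sat R' V' y (Box a)"
    proof (simp, intro allI impI)
      fix y' assume "(y,y') \<in> R'"
      then obtain x' where "(x,x') \<in> R" "(x',y') \<in> Z" using bck Box.prems by blast
      then show "sat R' V' y' a" using Box.IH[of x' y'] Box.prems h by auto
    qed
  next
    assume h: "sat R' V' y (Box a)"
    show "sat R V x (Box a)"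
    proof (simp, intro allI impI)
      fix x' assume "(x,x') \<in> R"
      then obtain y' where "(y,y') \<in> R'" "(x',y') \<in> Z" using fwd Box.prems by blast
      then show "sat R V x' a" using Box.IH[of x' y'] Box.prems h by auto
    qed
  qed
qed auto

theorem lemma36:
  fixes L :: "nat fm set" and A B :: "'a set" and \<rho> :: "'a \<Rightarrow> 'a set"
  assumes "euclidean_logic L"
    and "in_K2 A B \<rho>"
    and "{2} \<times> {-1..} \<subseteq> S_of L"
  shows "logic_valid_in L (galaxy_W A B) (galaxy_R A B \<rho>)"
  unfolding logic_valid_in_def valid_in_def
proof (intro ballI allI)
  fix \<phi> V w assume phiL: "\<phi> \<in> L" and wW: "w \<in> galaxy_W A B"
  have disj: "A \<inter> B = {}" and rhoB: "\<And>s. s \<in> A \<Longrightarrow> \<rho> s \<subseteq> B"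
    and c2: "\<And>s. s \<in> A \<Longrightarrow> card (\<rho> s) = 2"
    using assms(2) unfolding in_K2_def is_galaxy_def by auto
  define R where "R = galaxy_R A B \<rho>"
  have Rchar: "\<And>x y. (x,y) \<in> R \<longleftrightarrow> (x \<in> A \<and> y \<in> \<rho> x) \<or> (x \<in> B \<and> y \<in> B)"
    unfolding R_def galaxy_R_def by auto
  obtain b1 b2 where b12: "if w \<in> A then \<rho> w = {b1,b2} else b1 = w \<and> b2 = w"
  proof (cases "w \<in> A")
    case True
    then obtain b1 b2 where "\<rho> w = {b1,b2}" using c2[OF True] by (meson card_2_iff)
    then show ?thesis using that True by auto
  next
    case False then show ?thesis using that by auto
  qed
  have wAB: "w \<in> A \<or> w \<in> B" using wW unfolding galaxy_W_def by auto
  have b1B: "b1 \<in> B" and b2B: "b2 \<in> B"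
    using b12 rhoB wAB by (auto split: if_splits)
  define X where "X = vars \<phi>"
  define t where "t x = {p \<in> X. x \<in> V p}" for x :: 'a
  define T where "T = t ` B"
  have finT: "finite T" unfolding T_def t_def
    by (rule finite_subset[of _ "Pow X"]) (auto simp: X_def finite_vars)
  obtain h where h: "bij_betw h {0..<card T} T" using ex_bij_betw_nat_finite[OF finT] by blast
  define n where "n = card T"
  define rep where "rep \<tau> = (SOME b. b \<in> B \<and> t b = \<tau>)" for \<tau>
  have rep: "\<And>\<tau>. \<tau> \<in> T \<Longrightarrow> rep \<tau> \<in> B \<and> t (rep \<tau>) = \<tau>"
    unfolding rep_def T_def by (rule someI_ex) auto
  define g where "g k = (if k = 1 then b1 else if k = 2 then b2 else rep (h (k - 3)))" for k
  have gB: "\<And>k. k \<in> {1..n+2} \<Longrightarrow> g k \<in> B"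
  proof -
    fix k :: nat assume k: "k \<in> {1..n+2}"
    show "g k \<in> B"
    proof (cases "k \<le> 2")
      case True then show ?thesis using k b1B b2B unfolding g_def by auto
    next
      case False
      then have "h (k-3) \<in> T" using h k unfolding n_def bij_betw_def by auto
      then show ?thesis using rep False unfolding g_def by auto
    qed
  qed
  have gsurj: "\<And>x. x \<in> B \<Longrightarrow> \<exists>k \<in> {1..n+2}. t (g k) = t x"
  proof -
    fix x assume "x \<in> B"
    then have "t x \<in> T" unfolding T_def by auto
    moreover have "h ` {0..<n} = T" using h unfolding n_def bij_betw_def by simp
    ultimately obtain j where j: "j < n" "h j = t x"
      by (metis (no_types, lifting) atLeastLessThan_iff imageE)
    have "t (g (j+3)) = t x" using rep[of "t x"] j \<open>t x \<in> T\<close> unfolding g_def by auto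
    then show "\<exists>k \<in> {1..n+2}. t (g k) = t x" using j by (intro bexI[of _ "j+3"]) auto
  qed
  define W' where "W' = flower_W 2 (int n)"
  define R' where "R' = flower_R 2 (int n)"
  have W': "W' = {0..n+2}" unfolding W'_def flower_W_def by auto
  have R'char: "\<And>x y. (x,y) \<in> R' \<longleftrightarrow> (x = 0 \<and> y \<in> {1..2}) \<or> (x \<in> {1..n+2} \<and> y \<in> {1..n+2})"
    unfolding R'_def flower_R_def by auto
  define V' where "V' p = {k. k \<ge> 1 \<and> g k \<in> V p} \<union> (if w \<in> V p then {0} else {})" for p
  define Z where "Z = {(x,k). x \<in> B \<and> k \<in> {1..n+2} \<and> t x = t (g k)} \<union> (if w \<in> A then {(w,0)} else {})"
  have "(2, int n) \<in> S_of L" using assms(3) by auto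
  then have "logic_valid_in L W' R'" unfolding S_of_def W'_def R'_def by auto
  then have valid: "\<And>y V. y \<in> W' \<Longrightarrow> sat R' V y \<phi>"
    using phiL unfolding logic_valid_in_def valid_in_def by auto
  have key: "\<And>x y. (x,y) \<in> Z \<Longrightarrow> sat R V x \<phi> = sat R' V' y \<phi>"
  proof (rule bisim[where X = X])
    fix x y p assume xy: "(x,y) \<in> Z" and p: "p \<in> X"
    show "x \<in> V p \<longleftrightarrow> y \<in> V' p"
    proof (cases "y = 0")
      case True
      then have "x = w" using xy unfolding Z_def by (auto split: if_splits)
      then show ?thesis using True unfolding V'_def by auto
    next
      case False
      then have "t x = t (g y)" using xy unfolding Z_def by (auto split: if_splits)
      then have "x \<in> V p \<longleftrightarrow> g y \<in> V p" using p unfolding t_def by blast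
      then show ?thesis using False unfolding V'_def by auto
    qed
  next
    fix x y x' assume xy: "(x,y) \<in> Z" and xx': "(x,x') \<in> R"
    show "\<exists>y'. (y,y') \<in> R' \<and> (x',y') \<in> Z"
    proof (cases "y = 0")
      case True
      then have wx: "x = w" "w \<in> A" using xy unfolding Z_def by (auto split: if_splits)
      then have "x' \<in> \<rho> w" using xx' disj Rchar by auto
      have x'B: "x' \<in> B" using \<open>x' \<in> \<rho> w\<close> rhoB wx by auto
      have "x' = g 1 \<or> x' = g 2" using b12 wx \<open>x' \<in> \<rho> w\<close> unfolding g_def by auto
      then show ?thesis
      proof
        assume "x' = g 1"
        then have "(y,1) \<in> R'" "(x',1) \<in> Z" using True x'B unfolding Z_def R'char by auto
        then show ?thesis by blast
      next
        assume "x' = g 2"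
        then have "(y,2) \<in> R'" "(x',2) \<in> Z" using True x'B unfolding Z_def R'char by auto
        then show ?thesis by blast
      qed
    next
      case False
      then have x: "x \<in> B" "y \<in> {1..n+2}" using xy unfolding Z_def by (auto split: if_splits)
      then have "x' \<in> B" using xx' disj Rchar by auto
      then obtain k where "k \<in> {1..n+2}" "t (g k) = t x'" using gsurj by blast
      then have "(y,k) \<in> R'" "(x',k) \<in> Z" using x \<open>x' \<in> B\<close> unfolding Z_def R'char by auto
      then show ?thesis by blast
    qed
  next
    fix x y y' assume xy: "(x,y) \<in> Z" and yy': "(y,y') \<in> R'"
    show "\<exists>x'. (x,x') \<in> R \<and> (x',y') \<in> Z"
    proof (cases "y = 0")
      case True
      then have wx: "x = w" "w \<in> A" using xy unfolding Z_def by (auto split: if_splits)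
      then have y': "y' \<in> {1..2}" using yy' True R'char by auto
      then have "g y' \<in> \<rho> w" using b12 wx unfolding g_def by auto
      moreover have "g y' \<in> B" using gB y' by auto
      ultimately have "(x, g y') \<in> R" "(g y', y') \<in> Z" using wx y' Rchar unfolding Z_def by auto
      then show ?thesis by blast
    next
      case False
      then have x: "x \<in> B" "y \<in> {1..n+2}" using xy unfolding Z_def by (auto split: if_splits)
      then have y': "y' \<in> {1..n+2}" using yy' R'char by auto
      then have "(x, g y') \<in> R" "(g y', y') \<in> Z" using x gB[OF y'] Rchar unfolding Z_def by auto
      then show ?thesis by blast
    qed
  qed (simp add: X_def)
  show "sat (galaxy_R A B \<rho>) V w \<phi>"
  proof (cases "w \<in> A")
    case True
    then have "(w,0) \<in> Z" unfolding Z_def by auto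
    then show ?thesis using key valid[of 0 V'] W' R_def by auto
  next
    case False
    then have "w \<in> B" using wAB by auto
    moreover have "g 1 = w" using b12 False unfolding g_def by auto
    ultimately have "(w,1) \<in> Z" unfolding Z_def by auto
    then show ?thesis using key valid[of 1 V'] W' R_def by auto
  qed
qed

end
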